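(* Let $G$ be a finite solvable group with commutator subgroup $G'$, and let $X$ be a finite undirected graph. If $G$ is representable on $X$, then $|G/G'|$ and $|\mathrm{Aut}(X)|$ have a common prime factor.
   Context: $G'$ is the subgroup of $G$ generated by all commutators $[x,y]=xyx^{-1}y^{-1}$. $\mathrm{Aut}(X)$ is the automorphism group of $X$. $G$ is representable on $X$ if there is a nontrivial homomorphism $G\to\mathrm{Aut}(X)$. *)

theory Defs
  imports "HOL-Algebra.Algebra"
begin

definition undirected_graph :: "'v set \<Rightarrow> ('v \<Rightarrow> 'v \<Rightarrow> bool) \<Rightarrow> bool" where
  "undirected_graph V E \<longleftrightarrow>
     (\<forall>x y. E x y \<longrightarrow> x \<in> V \<and> y \<in> V) \<and>
     (\<forall>x y. E x y \<longrightarrow> E y x) \<and>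
     (\<forall>x. \<not> E x x)"

definition graph_aut_group :: "'v set \<Rightarrow> ('v \<Rightarrow> 'v \<Rightarrow> bool) \<Rightarrow> ('v \<Rightarrow> 'v) monoid" where
  "graph_aut_group V E = (BijGroup V)\<lparr>carrier :=
     {f \<in> Bij V. \<forall>x\<in>V. \<forall>y\<in>V. E (f x) (f y) \<longleftrightarrow> E x y}\<rparr>"

definition representable_on :: "('a, 'c) monoid_scheme \<Rightarrow> ('b, 'd) monoid_scheme \<Rightarrow> bool" where
  "representable_on G H \<longleftrightarrow>
     (\<exists>h. h \<in> hom G H \<and> (\<exists>g \<in> carrier G. h g \<noteq> \<one>\<^bsub>H\<^esub>))"

end

theory Submission
  imports Defs
begin

lemma aut_subgroup:
  "subgroup {f \<in> Bij V. \<forall>x\<in>V. \<forall>y\<in>V. E (f x) (f y) \<longleftrightarrow> E x y} (BijGroup V)"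
proof (rule subgroup.intro)
  show "{f \<in> Bij V. \<forall>x\<in>V. \<forall>y\<in>V. E (f x) (f y) = E x y} \<subseteq> carrier (BijGroup V)"
    by (auto simp: BijGroup_def)
next
  fix x y assume x: "x \<in> {f \<in> Bij V. \<forall>x\<in>V. \<forall>y\<in>V. E (f x) (f y) = E x y}"
    and y: "y \<in> {f \<in> Bij V. \<forall>x\<in>V. \<forall>y\<in>V. E (f x) (f y) = E x y}"
  have yV: "\<And>z. z \<in> V \<Longrightarrow> y z \<in> V" using y Bij_imp_funcset by blast
  show "x \<otimes>\<^bsub>BijGroup V\<^esub> y \<in> {f \<in> Bij V. \<forall>x\<in>V. \<forall>y\<in>V. E (f x) (f y) = E x y}"
  proof -
    have c: "compose V x y \<in> Bij V" using x y compose_Bij by blast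
    have m: "x \<otimes>\<^bsub>BijGroup V\<^esub> y = compose V x y" using x y by (simp add: BijGroup_def)
    have "\<forall>a\<in>V. \<forall>b\<in>V. E (compose V x y a) (compose V x y b) = E a b"
      using x y yV by (simp add: compose_def)
    then show ?thesis using c m by simp
  qed
next
  show "\<one>\<^bsub>BijGroup V\<^esub> \<in> {f \<in> Bij V. \<forall>x\<in>V. \<forall>y\<in>V. E (f x) (f y) = E x y}"
    by (simp add: BijGroup_def id_Bij)
next
  fix f assume f: "f \<in> {f \<in> Bij V. \<forall>x\<in>V. \<forall>y\<in>V. E (f x) (f y) = E x y}"
  have fB: "f \<in> Bij V" using f by simp
  have bij: "bij_betw f V V" using fB by (simp add: Bij_def)
  have "\<forall>x\<in>V. \<forall>y\<in>V. E (inv_into V f x) (inv_into V f y) = E x y"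
  proof (intro ballI)
    fix x y assume "x \<in> V" "y \<in> V"
    have fE: "\<forall>a\<in>V. \<forall>b\<in>V. E (f a) (f b) = E a b" using f by simp
    have a1: "inv_into V f x \<in> V" "inv_into V f y \<in> V"
      using Bij_inv_into_mem[OF fB] \<open>x \<in> V\<close> \<open>y \<in> V\<close> by auto
    have a2: "f (inv_into V f x) = x" "f (inv_into V f y) = y"
      using bij_betw_inv_into_right[OF bij] \<open>x \<in> V\<close> \<open>y \<in> V\<close> by auto
    have "E (f (inv_into V f x)) (f (inv_into V f y)) = E (inv_into V f x) (inv_into V f y)"
      using fE a1 by blast
    then show "E (inv_into V f x) (inv_into V f y) = E x y" using a2 by simp
  qed
  then show "inv\<^bsub>BijGroup V\<^esub> f \<in> {f \<in> Bij V. \<forall>x\<in>V. \<forall>y\<in>V. E (f x) (f y) = E x y}"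
    using fB by (simp add: inv_BijGroup restrict_inv_into_Bij)
qed

lemma group_aut: "group (graph_aut_group V E)"
  unfolding graph_aut_group_def
  using group.subgroup_imp_group[OF group_BijGroup aut_subgroup[of V E]] by simp

lemma img_ker_card:
  assumes G: "group G" and H: "group H" and h: "h \<in> hom G H"
  shows "card (carrier G) = card (h ` carrier G) * card (kernel G H h)"
proof -
  interpret gh: group_hom G H h using G H h by (simp add: group_hom_def group_hom_axioms_def)
  let ?H' = "H\<lparr>carrier := h ` carrier G\<rparr>"
  have sg: "subgroup (h ` carrier G) H"
    using gh.subgroup_img_is_subgroup[OF gh.G.subgroup_self] .
  have gH': "group ?H'" using group.subgroup_imp_group[OF H sg] .
  have h': "h \<in> hom G ?H'" using h by (auto simp: hom_def)
  interpret gh': group_hom G ?H' h using G gH' h' by (simp add: group_hom_def group_hom_axioms_def)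
  have ker: "kernel G ?H' h = kernel G H h" by (simp add: kernel_def)
  have isoK: "G Mod (kernel G H h) \<cong> ?H'" using gh'.FactGroup_iso[of] ker by simp
  have c1: "card (carrier (G Mod kernel G H h)) = card (h ` carrier G)"
    using iso_same_card[OF isoK] by simp
  have "carrier (G Mod kernel G H h) = rcosets\<^bsub>G\<^esub> (kernel G H h)"
    by (simp add: FactGroup_def RCOSETS_def)
  moreover have "card (rcosets\<^bsub>G\<^esub> (kernel G H h)) * card (kernel G H h) = order G"
    using gh.G.lagrange[OF gh.subgroup_kernel] .
  ultimately show ?thesis using c1 by (simp add: order_def)
qed

theorem mainTheorem5:
  fixes G :: "('a, 'c) monoid_scheme"
    and V :: "'v set" and E :: "'v \<Rightarrow> 'v \<Rightarrow> bool"
  assumes "group G" and "finite (carrier G)" and "solvable G"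
    and "finite V" and "undirected_graph V E"
    and "representable_on G (graph_aut_group V E)"
  shows "\<exists>p::nat. Factorial_Ring.prime p
           \<and> p dvd order (G Mod (derived G (carrier G)))
           \<and> p dvd order (graph_aut_group V E)"
proof -
  let ?H = "graph_aut_group V E"
  have G: "group G" and H: "group ?H" using assms(1) group_aut by auto
  obtain h g0 where h: "h \<in> hom G ?H" and g0: "g0 \<in> carrier G" "h g0 \<noteq> \<one>\<^bsub>?H\<^esub>"
    using assms(6) unfolding representable_on_def by blast
  interpret gh: group_hom G ?H h using G H h by (simp add: group_hom_def group_hom_axioms_def)
  define K where "K = h ` carrier G"
  define D where "D = derived G (carrier G)"
  have finG: "finite (carrier G)" by fact
  have sD: "subgroup D G" unfolding D_def using gh.G.derived_is_subgroup by simp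
  have sK: "subgroup K ?H" unfolding K_def using gh.subgroup_img_is_subgroup[OF gh.G.subgroup_self] .
  have sHD: "subgroup (h ` D) ?H" using gh.subgroup_img_is_subgroup[OF sD] .
  have solvK: "solvable_seq ?H K"
    using gh.solvable_imp_solvable_img[of "carrier G"] assms(3) unfolding solvable_def K_def by simp
  have derK: "derived ?H K = h ` D"
    unfolding K_def D_def using gh.derived_img[of "carrier G"] by simp
  have hDK: "h ` D \<subseteq> K" unfolding K_def using subgroup.subset[OF sD] by auto
  have neq: "h ` D \<noteq> K"
  proof
    assume eq: "h ` D = K"
    have "(derived ?H ^^ n) K = K" for n by (induction n) (use derK eq in auto)
    moreover obtain n where "(derived ?H ^^ n) K = {\<one>\<^bsub>?H\<^esub>}"
      using group.solvable_imp_trivial_derived_seq[OF H solvK] by blast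
    ultimately have "K = {\<one>\<^bsub>?H\<^esub>}" by simp
    then show False using g0 unfolding K_def by auto
  qed
  define M where "M = {g \<in> carrier G. h g \<in> h ` D}"
  have sM: "subgroup M G"
  proof (rule subgroup.intro)
    show "M \<subseteq> carrier G" unfolding M_def by auto
  next
    fix x y assume "x \<in> M" "y \<in> M"
    then show "x \<otimes>\<^bsub>G\<^esub> y \<in> M" unfolding M_def
      using subgroup.m_closed[OF sHD] by auto
  next
    show "\<one>\<^bsub>G\<^esub> \<in> M" unfolding M_def
      using subgroup.one_closed[OF sHD] by auto
  next
    fix x assume "x \<in> M"
    then show "inv\<^bsub>G\<^esub> x \<in> M" unfolding M_def
      using subgroup.m_inv_closed[OF sHD] by auto
  qed
  have DM: "D \<subseteq> M" unfolding M_def using subgroup.subset[OF sD] by auto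
  have hM: "h ` M = h ` D" unfolding M_def using DM M_def by auto
  have GM: "group (G\<lparr>carrier := M\<rparr>)" using gh.G.subgroup_imp_group[OF sM] .
  have hMh: "h \<in> hom (G\<lparr>carrier := M\<rparr>) ?H" using subgroup.subset[OF sM] by (auto simp: hom_def intro!: gh.hom_mult)
  have kerM: "kernel (G\<lparr>carrier := M\<rparr>) ?H h = kernel G ?H h"
    unfolding kernel_def M_def using subgroup.one_closed[OF sHD] by auto
  have c1: "card (carrier G) = card K * card (kernel G ?H h)"
    using img_ker_card[OF G H h] unfolding K_def .
  have c2: "card M = card (h ` D) * card (kernel G ?H h)"
    using img_ker_card[OF GM H hMh] kerM hM by simp
  have finN: "finite (kernel G ?H h)" using finG unfolding kernel_def by auto
  have "\<one>\<^bsub>G\<^esub> \<in> kernel G ?H h" unfolding kernel_def by simp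
  then have cN: "card (kernel G ?H h) > 0" using finN card_gt_0_iff by blast
  define q where "q = card (rcosets\<^bsub>G\<^esub> M)"
  define r where "r = card (rcosets\<^bsub>G\<lparr>carrier := M\<rparr>\<^esub> D)"
  have l1: "q * card M = card (carrier G)" using gh.G.lagrange[OF sM] unfolding q_def order_def .
  have l2: "card (rcosets\<^bsub>G\<^esub> D) * card D = card (carrier G)" using gh.G.lagrange[OF sD] unfolding order_def .
  have sDM: "subgroup D (G\<lparr>carrier := M\<rparr>)" using gh.G.subgroup_incl[OF sD sM DM] .
  have l3: "r * card D = card M" using group.lagrange[OF GM sDM] unfolding r_def order_def by simp
  have finD: "finite D" using finG subgroup.subset[OF sD] finite_subset by blast
  have cD: "card D > 0" using finD subgroup.one_closed[OF sD] card_gt_0_iff by blast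
  have eK: "card K * card (kernel G ?H h) = (q * card (h ` D)) * card (kernel G ?H h)"
  proof -
    have "card K * card (kernel G ?H h) = card (carrier G)" using c1 by simp
    also have "\<dots> = q * card M" using l1 by simp
    also have "\<dots> = q * (card (h ` D) * card (kernel G ?H h))" using c2 by simp
    also have "\<dots> = (q * card (h ` D)) * card (kernel G ?H h)" by (simp only: mult.assoc)
    finally show ?thesis .
  qed
  have qK: "card K = q * card (h ` D)" using eK cN by (simp only: mult_cancel2) simp
  have eD: "card (rcosets\<^bsub>G\<^esub> D) * card D = (q * r) * card D"
  proof -
    have "card (rcosets\<^bsub>G\<^esub> D) * card D = card (carrier G)" using l2 by simp
    also have "\<dots> = q * card M" using l1 by simp
    also have "\<dots> = q * (r * card D)" using l3 by simp
    also have "\<dots> = (q * r) * card D" by (simp only: mult.assoc)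
    finally show ?thesis .
  qed
  have iD: "card (rcosets\<^bsub>G\<^esub> D) = q * r" using eD cD by (simp only: mult_cancel2) simp
  have finK: "finite K" unfolding K_def using finG by simp
  have "q \<noteq> 1"
  proof
    assume "q = 1"
    then have "card (h ` D) = card K" using qK by simp
    then show False using neq hDK finK card_subset_eq by blast
  qed
  then obtain p :: nat where p: "Factorial_Ring.prime p" "p dvd q" using prime_factor_nat by blast
  have "carrier (G Mod D) = rcosets\<^bsub>G\<^esub> D" by (simp add: FactGroup_def RCOSETS_def)
  then have pG: "p dvd order (G Mod D)" using p iD by (simp add: order_def)
  have "card K dvd order ?H"
    using group.lagrange[OF H sK] by (metis dvd_triv_right)
  moreover have "p dvd card K" using qK p(2) by (simp add: dvd_mult2)
  ultimately have "p dvd order ?H" using dvd_trans by blast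
  then show ?thesis using p pG unfolding D_def by blast
qed

end
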